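(* Let $A\le B$ be quasi-copulas on $[0,1]^2$. Then there exists a copula $C$ with $A\le C\le B$ if and only if $L^{(A,B)}(R)\ge0$ for all $R\in\mathfrak{R}$.
   Context: For $Q:[0,1]^2\to\mathbb{R}$, $V_Q([s_1,s_2]\times[t_1,t_2])=Q(s_1,t_1)+Q(s_2,t_2)-Q(s_2,t_1)-Q(s_1,t_2)$. A copula is grounded ($Q(x,0)=Q(0,y)=0$), has neutral element 1 ($Q(x,1)=x$, $Q(1,y)=y$) and $V_Q(R)\ge0$ for all rectangles in $[0,1]^2$; a quasi-copula is grounded, has neutral element $1$, and $V_Q(R)\ge0$ for rectangles having a side on the boundary of $[0,1]^2$. A rectangle is $[s_1,s_2]\times[t_1,t_2]\subseteq[0,1]^2$ with $s_1<s_2$, $t_1<t_2$; main corners: southwest and northeast; opposite corners: southeast and northwest. $\mathfrak{R}$: finite formal unions $R=R_1\sqcup\dots\sqcup R_n$ of rectangles (repetitions allowed), with multiplicity $m_R(\mathbf{y})=\sum_i m_{R_i}(\mathbf{y})$, where $m_{R_i}(\mathbf{y})$ is $1$ at main corners, $-1$ at opposite corners, $0$ elsewhere. $L^{(A,B)}(R)=\sum_{m_R(\mathbf{y})>0}B(\mathbf{y})m_R(\mathbf{y})+\sum_{m_R(\mathbf{y})<0}A(\mathbf{y})m_R(\mathbf{y})$. *)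

theory Defs
  imports Complex_Main
begin

type_synonym pt = "real \<times> real"

text \<open>A rectangle [s1,s2] x [t1,t2] is encoded as ((s1,s2),(t1,t2)).\<close>
type_synonym rect = "(real \<times> real) \<times> (real \<times> real)"

definition unit_sq :: "pt set" where
  "unit_sq = {0..1} \<times> {0..1}"

definition is_rect :: "rect \<Rightarrow> bool" where
  "is_rect r = (case r of ((s1,s2),(t1,t2)) \<Rightarrow>
      0 \<le> s1 \<and> s1 < s2 \<and> s2 \<le> 1 \<and> 0 \<le> t1 \<and> t1 < t2 \<and> t2 \<le> 1)"

definition Vol :: "(pt \<Rightarrow> real) \<Rightarrow> rect \<Rightarrow> real" where
  "Vol Q r = (case r of ((s1,s2),(t1,t2)) \<Rightarrow>
      Q (s1,t1) + Q (s2,t2) - Q (s2,t1) - Q (s1,t2))"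

definition grounded :: "(pt \<Rightarrow> real) \<Rightarrow> bool" where
  "grounded Q = (\<forall>x\<in>{0..1}. Q (x,0) = 0 \<and> Q (0,x) = 0)"

definition neutral_one :: "(pt \<Rightarrow> real) \<Rightarrow> bool" where
  "neutral_one Q = (\<forall>x\<in>{0..1}. Q (x,1) = x \<and> Q (1,x) = x)"

definition copula :: "(pt \<Rightarrow> real) \<Rightarrow> bool" where
  "copula Q = (grounded Q \<and> neutral_one Q \<and> (\<forall>r. is_rect r \<longrightarrow> Vol Q r \<ge> 0))"

definition side_on_boundary :: "rect \<Rightarrow> bool" where
  "side_on_boundary r = (case r of ((s1,s2),(t1,t2)) \<Rightarrow>
      s1 = 0 \<or> s2 = 1 \<or> t1 = 0 \<or> t2 = 1)"

definition quasi_copula :: "(pt \<Rightarrow> real) \<Rightarrow> bool" where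
  "quasi_copula Q = (grounded Q \<and> neutral_one Q \<and>
      (\<forall>r. is_rect r \<and> side_on_boundary r \<longrightarrow> Vol Q r \<ge> 0))"

definition rect_mult :: "rect \<Rightarrow> pt \<Rightarrow> int" where
  "rect_mult r y = (case r of ((s1,s2),(t1,t2)) \<Rightarrow>
      (if y = (s1,t1) \<or> y = (s2,t2) then 1
       else if y = (s2,t1) \<or> y = (s1,t2) then -1 else 0))"

definition rect_corners :: "rect \<Rightarrow> pt set" where
  "rect_corners r = (case r of ((s1,s2),(t1,t2)) \<Rightarrow> {(s1,t1),(s2,t2),(s2,t1),(s1,t2)})"

text \<open>Elements of the class of formal unions: finite lists of rectangles
  (repetitions allowed).\<close>
definition formal_union :: "rect list \<Rightarrow> bool" where
  "formal_union R = (\<forall>r\<in>set R. is_rect r)"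

definition mult :: "rect list \<Rightarrow> pt \<Rightarrow> int" where
  "mult R y = (\<Sum>r\<leftarrow>R. rect_mult r y)"

definition union_corners :: "rect list \<Rightarrow> pt set" where
  "union_corners R = (\<Union>r\<in>set R. rect_corners r)"

text \<open>Only corners of the constituent rectangles can have nonzero multiplicity.\<close>
definition L_AB :: "(pt \<Rightarrow> real) \<Rightarrow> (pt \<Rightarrow> real) \<Rightarrow> rect list \<Rightarrow> real" where
  "L_AB A B R =
     (\<Sum>y\<in>{y\<in>union_corners R. mult R y > 0}. B y * of_int (mult R y)) +
     (\<Sum>y\<in>{y\<in>union_corners R. mult R y < 0}. A y * of_int (mult R y))"

end

theory Submission imports Defs begin

definition gval :: "real \<Rightarrow> real \<Rightarrow> int \<Rightarrow> real" where
  "gval \<alpha> \<beta> m = (if m > 0 then \<beta> * of_int m else if m < 0 then \<alpha> * of_int m else 0)"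

lemma finite_UC: "finite (union_corners R)"
  unfolding union_corners_def rect_corners_def by (auto split: prod.splits)

lemma rect_mult_out: "y \<notin> rect_corners r \<Longrightarrow> rect_mult r y = 0"
  unfolding rect_corners_def rect_mult_def by (auto split: prod.splits)

lemma mult_out: "y \<notin> union_corners R \<Longrightarrow> mult R y = 0"
  unfolding mult_def union_corners_def
  by (induction R) (auto simp: rect_mult_out)

lemma mult_Cons[simp]: "mult (r # R) y = rect_mult r y + mult R y"
  by (simp add: mult_def)
lemma mult_Nil[simp]: "mult [] y = 0"
  by (simp add: mult_def)
lemma mult_append[simp]: "mult (R @ S) y = mult R y + mult S y"
  by (simp add: mult_def)
lemma mult_rep[simp]: "mult (concat (replicate n R)) y = of_nat n * mult R y"
  by (induction n) (auto simp: algebra_simps)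

lemma L_gval: "L_AB a b R = (\<Sum>z\<in>union_corners R. gval (a z) (b z) (mult R z))"
proof -
  have f: "finite (union_corners R)" by (rule finite_UC)
  show ?thesis unfolding L_AB_def gval_def
    by (auto simp: sum.inter_filter[OF f] sum.distrib[symmetric] intro!: sum.cong)
qed

lemma L_gval_sup: assumes "finite S" "union_corners R \<subseteq> S"
  shows "L_AB a b R = (\<Sum>z\<in>S. gval (a z) (b z) (mult R z))"
  unfolding L_gval
  by (rule sum.mono_neutral_left[OF assms]) (auto simp: mult_out gval_def)

lemma gval_max: "\<alpha> \<le> \<beta> \<Longrightarrow> gval \<alpha> \<beta> m = max (\<alpha> * of_int m) (\<beta> * of_int m)"
  unfolding gval_def
  by (auto simp: max_def mult_right_mono mult_right_mono_neg)

lemma max_sub: fixes x y q p al be :: real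
  assumes "q \<ge> 0" "p \<ge> 0"
  shows "max (al*(q*x+p*y)) (be*(q*x+p*y)) \<le> q * max (al*x) (be*x) + p * max (al*y) (be*y)"
proof -
  have "al*(q*x+p*y) = q*(al*x) + p*(al*y)" "be*(q*x+p*y) = q*(be*x) + p*(be*y)" by (simp_all add: algebra_simps)
  moreover have "q*(al*x) \<le> q * max (al*x) (be*x)" "q*(be*x) \<le> q * max (al*x) (be*x)"
     "p*(al*y) \<le> p * max (al*y) (be*y)" "p*(be*y) \<le> p * max (al*y) (be*y)"
    using assms by (simp_all add: mult_left_mono)
  ultimately show ?thesis by simp
qed

lemma gval_sub: assumes "\<alpha> \<le> \<beta>" "q \<ge> 0" "p \<ge> 0"
  shows "gval \<alpha> \<beta> (q*m1 + p*m2) \<le> of_int q * gval \<alpha> \<beta> m1 + of_int p * gval \<alpha> \<beta> m2"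
  using max_sub[of "of_int q" "of_int p" \<alpha> "of_int m1" "of_int m2" \<beta>] assms
  by (simp add: gval_max)

lemma gval_same: "gval c c m = c * of_int m"
  by (simp add: gval_def)

lemma gval_ge: "\<alpha> \<le> c \<Longrightarrow> c \<le> \<beta> \<Longrightarrow> c * of_int m \<le> gval \<alpha> \<beta> m"
  unfolding gval_def by (auto simp: mult_right_mono mult_right_mono_neg)

lemma corners_sq: "is_rect r \<Longrightarrow> rect_corners r \<subseteq> unit_sq"
  unfolding is_rect_def rect_corners_def unit_sq_def by (auto split: prod.splits)

lemma UC_sq: "formal_union R \<Longrightarrow> union_corners R \<subseteq> unit_sq"
  unfolding formal_union_def union_corners_def using corners_sq by blast

lemma rect_sum: assumes "is_rect r" "finite S" "rect_corners r \<subseteq> S"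
  shows "(\<Sum>z\<in>S. f z * of_int (rect_mult r z)) = Vol f r"
proof -
  have "(\<Sum>z\<in>S. f z * of_int (rect_mult r z)) = (\<Sum>z\<in>rect_corners r. f z * of_int (rect_mult r z))"
    by (rule sum.mono_neutral_right[OF assms(2,3)]) (auto simp: rect_mult_out)
  also have "\<dots> = Vol f r"
    using assms(1) unfolding is_rect_def rect_corners_def rect_mult_def Vol_def
    by (auto split: prod.splits)
  finally show ?thesis .
qed

lemma lin_sum: assumes "formal_union R" "finite S" "union_corners R \<subseteq> S"
  shows "(\<Sum>z\<in>S. f z * of_int (mult R z)) = (\<Sum>r\<leftarrow>R. Vol f r)"
  using assms
proof (induction R)
  case Nil then show ?case by simp
next
  case (Cons r R)
  have "(\<Sum>z\<in>S. f z * of_int (mult (r#R) z)) = (\<Sum>z\<in>S. f z * of_int (rect_mult r z)) + (\<Sum>z\<in>S. f z * of_int (mult R z))"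
    by (simp add: algebra_simps sum.distrib)
  also have "(\<Sum>z\<in>S. f z * of_int (rect_mult r z)) = Vol f r"
    using Cons.prems by (intro rect_sum) (auto simp: formal_union_def union_corners_def)
  also have "(\<Sum>z\<in>S. f z * of_int (mult R z)) = (\<Sum>r\<leftarrow>R. Vol f r)"
    using Cons.prems by (intro Cons.IH) (auto simp: formal_union_def union_corners_def)
  finally show ?case by simp
qed


lemma formal_rep: "formal_union R \<Longrightarrow> formal_union (concat (replicate n R))"
  unfolding formal_union_def by (induction n) auto

lemma UC_append: "union_corners (R @ S) = union_corners R \<union> union_corners S"
  unfolding union_corners_def by auto
lemma UC_rep: "union_corners (concat (replicate n R)) \<subseteq> union_corners R"
  unfolding union_corners_def by (induction n) auto

lemma combine:
  assumes ab: "\<forall>y\<in>unit_sq. a y \<le> b y"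
    and L: "\<forall>R. formal_union R \<longrightarrow> 0 \<le> L_AB a b R"
    and R1: "formal_union R1" and R2: "formal_union R2"
    and p: "mult R1 y0 = p" "p > 0" and q: "mult R2 y0 = - q" "q > 0"
  shows "of_int p * of_int q * (b y0 - a y0) \<le> of_int q * L_AB a b R1 + of_int p * L_AB a b R2"
proof -
  define R where "R = concat (replicate (nat q) R1) @ concat (replicate (nat p) R2)"
  have fR: "formal_union R" unfolding R_def using R1 R2
    by (auto simp: formal_union_def set_replicate_conv_if)
  have mR: "mult R z = q * mult R1 z + p * mult R2 z" for z
    unfolding R_def using p q by simp
  define S where "S = union_corners R1 \<union> union_corners R2"
  have fS: "finite S" unfolding S_def by (simp add: finite_UC)
  have SR: "union_corners R \<subseteq> S" unfolding R_def S_def UC_append using UC_rep by blast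
  have y0S: "y0 \<in> S" unfolding S_def using mult_out p by fastforce
  have Ssq: "S \<subseteq> unit_sq" unfolding S_def using UC_sq R1 R2 by blast
  have "0 \<le> L_AB a b R" using L fR by blast
  also have "L_AB a b R = (\<Sum>z\<in>S. gval (a z) (b z) (mult R z))"
    by (rule L_gval_sup[OF fS SR])
  also have "\<dots> = gval (a y0) (b y0) (mult R y0) + (\<Sum>z\<in>S-{y0}. gval (a z) (b z) (mult R z))"
    by (rule sum.remove[OF fS y0S])
  also have "gval (a y0) (b y0) (mult R y0) = 0" using mR p q by (simp add: gval_def)
  also have "(\<Sum>z\<in>S-{y0}. gval (a z) (b z) (mult R z)) \<le>
     (\<Sum>z\<in>S-{y0}. of_int q * gval (a z) (b z) (mult R1 z) + of_int p * gval (a z) (b z) (mult R2 z))"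
    unfolding mR using Ssq ab p q by (intro sum_mono gval_sub) auto
  also have "\<dots> = of_int q * (\<Sum>z\<in>S-{y0}. gval (a z) (b z) (mult R1 z)) + of_int p * (\<Sum>z\<in>S-{y0}. gval (a z) (b z) (mult R2 z))"
    by (simp add: sum.distrib sum_distrib_left)
  also have "(\<Sum>z\<in>S-{y0}. gval (a z) (b z) (mult R1 z)) = L_AB a b R1 - gval (a y0) (b y0) (mult R1 y0)"
    using L_gval_sup[OF fS, of R1 a b] sum.remove[OF fS y0S, of "\<lambda>z. gval (a z) (b z) (mult R1 z)"]
    unfolding S_def by auto
  also have "(\<Sum>z\<in>S-{y0}. gval (a z) (b z) (mult R2 z)) = L_AB a b R2 - gval (a y0) (b y0) (mult R2 y0)"
    using L_gval_sup[OF fS, of R2 a b] sum.remove[OF fS y0S, of "\<lambda>z. gval (a z) (b z) (mult R2 z)"]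
    unfolding S_def by auto
  finally show ?thesis using p q by (simp add: gval_def algebra_simps)
qed


lemma L_upd:
  assumes "formal_union R" "y0 \<in> unit_sq"
  shows "L_AB (a(y0:=c)) (b(y0:=c)) R = L_AB a b R - gval (a y0) (b y0) (mult R y0) + c * of_int (mult R y0)"
proof -
  define S where "S = insert y0 (union_corners R)"
  have fS: "finite S" unfolding S_def by (simp add: finite_UC)
  have SR: "union_corners R \<subseteq> S" unfolding S_def by auto
  have y: "y0 \<in> S" unfolding S_def by auto
  have "L_AB (a(y0:=c)) (b(y0:=c)) R = gval c c (mult R y0) + (\<Sum>z\<in>S-{y0}. gval (a z) (b z) (mult R z))"
    unfolding L_gval_sup[OF fS SR] sum.remove[OF fS y] by (auto intro!: sum.cong)
  moreover have "L_AB a b R = gval (a y0) (b y0) (mult R y0) + (\<Sum>z\<in>S-{y0}. gval (a z) (b z) (mult R z))"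
    unfolding L_gval_sup[OF fS SR] sum.remove[OF fS y] by simp
  ultimately show ?thesis by (simp add: gval_same)
qed

lemma step:
  assumes ab: "\<forall>y\<in>unit_sq. a y \<le> b y"
    and L: "\<forall>R. formal_union R \<longrightarrow> 0 \<le> L_AB a b R"
    and y0: "y0 \<in> unit_sq"
  shows "\<exists>c. a y0 \<le> c \<and> c \<le> b y0 \<and> (\<forall>R. formal_union R \<longrightarrow> 0 \<le> L_AB (a(y0:=c)) (b(y0:=c)) R)"
proof -
  define LO where "LO = {b y0 - L_AB a b R / of_int (mult R y0) | R. formal_union R \<and> mult R y0 > 0}"
  define c where "c = Sup (insert (a y0) LO)"
  have LOb: "x \<le> b y0" if "x \<in> LO" for x
    using that L unfolding LO_def by auto
  have bdd: "bdd_above (insert (a y0) LO)" using LOb ab y0 by (auto intro!: bdd_aboveI[of _ "b y0"])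
  have c1: "a y0 \<le> c" unfolding c_def by (rule cSup_upper[OF _ bdd]) auto
  have c2: "c \<le> b y0" unfolding c_def using LOb ab y0 by (intro cSup_least) auto
  have lo: "b y0 - L_AB a b R / of_int (mult R y0) \<le> c" if "formal_union R" "mult R y0 > 0" for R
    unfolding c_def by (rule cSup_upper[OF _ bdd]) (use that in \<open>auto simp: LO_def\<close>)
  have hi: "c \<le> a y0 + L_AB a b R / of_int (- mult R y0)" if R2: "formal_union R" "mult R y0 < 0" for R
    unfolding c_def
  proof (rule cSup_least)
    fix x assume "x \<in> insert (a y0) LO"
    then show "x \<le> a y0 + L_AB a b R / of_int (- mult R y0)"
    proof
      assume "x = a y0" then show ?thesis using L R2 by (simp add: divide_nonneg_neg)
    next
      assume "x \<in> LO"
      then obtain R1 where R1: "formal_union R1" "mult R1 y0 > 0" and x: "x = b y0 - L_AB a b R1 / of_int (mult R1 y0)"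
        unfolding LO_def by auto
      define p where "p = mult R1 y0"
      define q where "q = - mult R y0"
      have pq: "p > 0" "q > 0" using R1 R2 unfolding p_def q_def by auto
      have key: "of_int p * of_int q * (b y0 - a y0) \<le> of_int q * L_AB a b R1 + of_int p * L_AB a b R"
        by (rule combine[OF ab L R1(1) R2(1)]) (use pq in \<open>auto simp: p_def q_def\<close>)
      have "x = b y0 - L_AB a b R1 / of_int p" using x p_def by simp
      moreover have "a y0 + L_AB a b R / of_int (- mult R y0) = a y0 + L_AB a b R / of_int q" using q_def by simp
      moreover have "b y0 - L_AB a b R1 / of_int p \<le> a y0 + L_AB a b R / of_int q"
        using key pq by (simp add: field_simps)
      ultimately show ?thesis by simp
    qed
  qed simp
  have "0 \<le> L_AB (a(y0:=c)) (b(y0:=c)) R" if R: "formal_union R" for R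
  proof -
    have e: "L_AB (a(y0:=c)) (b(y0:=c)) R = L_AB a b R - gval (a y0) (b y0) (mult R y0) + c * of_int (mult R y0)"
      by (rule L_upd[OF R y0])
    consider "mult R y0 > 0" | "mult R y0 < 0" | "mult R y0 = 0" by linarith
    then show ?thesis
    proof cases
      case 1
      have "b y0 - L_AB a b R / of_int (mult R y0) \<le> c" using lo[OF R 1] .
      then have "b y0 * of_int (mult R y0) - L_AB a b R \<le> c * of_int (mult R y0)"
        using 1 by (simp add: field_simps)
      then show ?thesis using e 1 by (simp add: gval_def)
    next
      case 2
      have "c \<le> a y0 + L_AB a b R / of_int (- mult R y0)" using hi[OF R 2] .
      then have "c * of_int (- mult R y0) \<le> a y0 * of_int (- mult R y0) + L_AB a b R"
        using 2 by (simp add: field_simps)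
      then show ?thesis using e 2 by (simp add: gval_def algebra_simps)
    next
      case 3 then show ?thesis using e L R by (simp add: gval_def)
    qed
  qed
  then show ?thesis using c1 c2 by blast
qed


definition valid :: "(pt \<Rightarrow> real) \<Rightarrow> (pt \<Rightarrow> real) \<Rightarrow> (pt \<Rightarrow> real) \<Rightarrow> (pt \<Rightarrow> real) \<Rightarrow> bool" where
  "valid A B a b = ((\<forall>y\<in>unit_sq. A y \<le> a y \<and> a y \<le> b y \<and> b y \<le> B y) \<and>
     (\<forall>R. formal_union R \<longrightarrow> 0 \<le> L_AB a b R))"

definition tok :: "(pt \<Rightarrow> real) \<Rightarrow> (pt \<Rightarrow> real) \<Rightarrow> (pt \<times> bool \<times> real) set" where
  "tok a b = {(y,True,v) | y v. y \<in> unit_sq \<and> v \<le> a y} \<union> {(y,False,v) | y v. y \<in> unit_sq \<and> b y \<le> v}"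

definition refines :: "(pt \<Rightarrow> real) \<times> (pt \<Rightarrow> real) \<Rightarrow> (pt \<Rightarrow> real) \<times> (pt \<Rightarrow> real) \<Rightarrow> bool" where
  "refines p p' = (\<forall>y\<in>unit_sq. fst p y \<le> fst p' y \<and> snd p' y \<le> snd p y)"

lemma tok_sub: "tok a b \<subseteq> tok a' b' \<longleftrightarrow> refines (a,b) (a',b')"
proof
  assume h: "tok a b \<subseteq> tok a' b'"
  show "refines (a,b) (a',b')" unfolding refines_def
  proof
    fix y assume y: "y \<in> unit_sq"
    have "(y,True,a y) \<in> tok a b" "(y,False,b y) \<in> tok a b" using y unfolding tok_def by blast+
    then have "(y,True,a y) \<in> tok a' b'" "(y,False,b y) \<in> tok a' b'" using h by auto
    then show "fst (a, b) y \<le> fst (a', b') y \<and> snd (a', b') y \<le> snd (a, b) y" unfolding tok_def by auto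
  qed
next
  assume "refines (a,b) (a',b')"
  then show "tok a b \<subseteq> tok a' b'" unfolding refines_def tok_def by force
qed

lemma gval_mono_eps:
  assumes "\<alpha> - e \<le> a'" "b' \<le> \<beta> + e" "a' \<le> b'" "\<alpha> \<le> \<beta>"
  shows "gval a' b' m \<le> gval \<alpha> \<beta> m + e * \<bar>of_int m\<bar>"
proof -
  consider "m > 0" | "m < 0" | "m = 0" by linarith
  then show ?thesis
  proof cases
    case 1
    then have "b' * of_int m \<le> (\<beta> + e) * of_int m" using assms by (intro mult_right_mono) auto
    then show ?thesis using 1 by (simp add: gval_def algebra_simps)
  next
    case 2
    then have "a' * of_int m \<le> (\<alpha> - e) * of_int m" using assms by (intro mult_right_mono_neg) auto
    then show ?thesis using 2 by (simp add: gval_def algebra_simps)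
  qed (simp add: gval_def)
qed

lemma chain_bound:
  assumes AB: "\<forall>y\<in>unit_sq. A y \<le> B y"
    and Ch: "Ch \<in> chains {tok a b | a b. valid A B a b}" and ne: "Ch \<noteq> {}"
  shows "\<exists>a b. valid A B a b \<and> (\<forall>X\<in>Ch. X \<subseteq> tok a b)"
proof -
  define P where "P = {(a,b). valid A B a b \<and> tok a b \<in> Ch}"
  have ChP: "\<forall>X\<in>Ch. \<exists>p\<in>P. X = tok (fst p) (snd p)"
  proof
    fix X assume X: "X \<in> Ch"
    then obtain a b where "valid A B a b" "X = tok a b" using Ch unfolding chains_def by blast
    then show "\<exists>p\<in>P. X = tok (fst p) (snd p)" using X unfolding P_def by auto
  qed
  have Pne: "P \<noteq> {}" using ChP ne by blast
  have Pv: "valid A B (fst p) (snd p)" if "p \<in> P" for p using that unfolding P_def by auto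
  have comp: "refines p1 p2 \<or> refines p2 p1" if "p1 \<in> P" "p2 \<in> P" for p1 p2
  proof -
    have "tok (fst p1) (snd p1) \<in> Ch" "tok (fst p2) (snd p2) \<in> Ch" using that unfolding P_def by auto
    then have "tok (fst p1) (snd p1) \<subseteq> tok (fst p2) (snd p2) \<or> tok (fst p2) (snd p2) \<subseteq> tok (fst p1) (snd p1)"
      using Ch unfolding chains_def chain_subset_def by blast
    then show ?thesis unfolding tok_sub by simp
  qed
  have up: "\<exists>p\<in>P. refines p1 p \<and> refines p2 p" if "p1 \<in> P" "p2 \<in> P" for p1 p2
  proof -
    have r: "refines p p" for p unfolding refines_def by auto
    show ?thesis using comp[OF that] r that by blast
  qed
  have cross: "fst p1 y \<le> snd p2 y" if "p1 \<in> P" "p2 \<in> P" "y \<in> unit_sq" for p1 p2 y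
    using comp[OF that(1,2)] Pv[OF that(1)] Pv[OF that(2)] that(3)
    unfolding refines_def valid_def by force
  define as where "as y = Sup ((\<lambda>p. fst p y) ` P)" for y
  define bs where "bs y = Inf ((\<lambda>p. snd p y) ` P)" for y
  have bddA: "bdd_above ((\<lambda>p. fst p y) ` P)" if "y \<in> unit_sq" for y
    using Pv that unfolding valid_def by (intro bdd_aboveI[of _ "B y"]) force
  have bddB: "bdd_below ((\<lambda>p. snd p y) ` P)" if "y \<in> unit_sq" for y
    using Pv that unfolding valid_def by (intro bdd_belowI[of _ "A y"]) force
  have as_ge: "fst p y \<le> as y" if "p \<in> P" "y \<in> unit_sq" for p y
    unfolding as_def using that bddA by (intro cSup_upper) auto
  have bs_le: "bs y \<le> snd p y" if "p \<in> P" "y \<in> unit_sq" for p y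
    unfolding bs_def using that bddB by (intro cInf_lower) auto
  have as_le: "as y \<le> snd p y" if "p \<in> P" "y \<in> unit_sq" for p y
    unfolding as_def using that Pne cross[OF _ that(1) that(2)] by (intro cSup_least) auto
  have asbs: "as y \<le> bs y" if "y \<in> unit_sq" for y
    unfolding bs_def using that Pne as_le[OF _ that] by (intro cInf_greatest) auto
  obtain p0 where p0: "p0 \<in> P" using Pne by auto
  have bnd: "A y \<le> as y \<and> as y \<le> bs y \<and> bs y \<le> B y" if "y \<in> unit_sq" for y
  proof -
    have "A y \<le> fst p0 y" "snd p0 y \<le> B y" using Pv[OF p0] that unfolding valid_def by auto
    then show ?thesis using as_ge[OF p0 that] bs_le[OF p0 that] asbs[OF that] by linarith
  qed
  have approx: "\<exists>p\<in>P. \<forall>z\<in>S. as z - e \<le> fst p z \<and> snd p z \<le> bs z + e"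
    if "finite S" "S \<subseteq> unit_sq" "e > 0" for S e
    using that
  proof (induction S rule: finite_induct)
    case empty then show ?case using p0 by blast
  next
    case (insert z S)
    then obtain p1 where p1: "p1 \<in> P" "\<forall>z\<in>S. as z - e \<le> fst p1 z \<and> snd p1 z \<le> bs z + e" by auto
    have z: "z \<in> unit_sq" using insert by auto
    have "as z - e < Sup ((\<lambda>p. fst p z) ` P)" using insert unfolding as_def by simp
    then obtain p2 where p2: "p2 \<in> P" "as z - e < fst p2 z"
      using less_cSup_iff[of "(\<lambda>p. fst p z) ` P"] Pne bddA[OF z] by auto
    have "Inf ((\<lambda>p. snd p z) ` P) < bs z + e" using insert unfolding bs_def by simp
    then obtain p3 where p3: "p3 \<in> P" "snd p3 z < bs z + e"
      using cInf_less_iff[of "(\<lambda>p. snd p z) ` P"] Pne bddB[OF z] by auto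
    obtain p4 where p4: "p4 \<in> P" "refines p1 p4" "refines p2 p4" using up[OF p1(1) p2(1)] by auto
    obtain p where p: "p \<in> P" "refines p4 p" "refines p3 p" using up[OF p4(1) p3(1)] by auto
    have "\<forall>y\<in>insert z S. as y - e \<le> fst p y \<and> snd p y \<le> bs y + e"
    proof
      fix y assume y: "y \<in> insert z S"
      then have ys: "y \<in> unit_sq" using insert.prems by auto
      have r: "fst p4 y \<le> fst p y" "snd p y \<le> snd p4 y" "fst p3 y \<le> fst p y" "snd p y \<le> snd p3 y"
         "fst p1 y \<le> fst p4 y" "snd p4 y \<le> snd p1 y" "fst p2 y \<le> fst p4 y" "snd p4 y \<le> snd p2 y"
        using p p4 ys unfolding refines_def by auto
      show "as y - e \<le> fst p y \<and> snd p y \<le> bs y + e"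
      proof (cases "y = z")
        case True then show ?thesis using r p2 p3 by auto
      next
        case False then have "y \<in> S" using y by auto
        then show ?thesis using r p1 by force
      qed
    qed
    then show ?case using p by blast
  qed
  have Lnn: "0 \<le> L_AB as bs R" if R: "formal_union R" for R
  proof (rule field_le_epsilon)
    fix e :: real assume e: "0 < e"
    define U where "U = union_corners R"
    define K where "K = (\<Sum>z\<in>U. \<bar>real_of_int (mult R z)\<bar>)"
    have K0: "K \<ge> 0" unfolding K_def by (simp add: sum_nonneg)
    define \<epsilon> where "\<epsilon> = e / (K + 1)"
    have eps: "\<epsilon> > 0" unfolding \<epsilon>_def using e K0 by simp
    have epsK: "\<epsilon> * K \<le> e" unfolding \<epsilon>_def using e K0 by (simp add: field_simps)
    have Usq: "U \<subseteq> unit_sq" unfolding U_def using UC_sq R by blast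
    obtain p where p: "p \<in> P" "\<forall>z\<in>U. as z - \<epsilon> \<le> fst p z \<and> snd p z \<le> bs z + \<epsilon>"
      using approx[OF _ Usq eps] finite_UC unfolding U_def by blast
    have "0 \<le> L_AB (fst p) (snd p) R" using Pv[OF p(1)] R unfolding valid_def by blast
    also have "\<dots> = (\<Sum>z\<in>U. gval (fst p z) (snd p z) (mult R z))" unfolding U_def by (rule L_gval)
    also have "\<dots> \<le> (\<Sum>z\<in>U. gval (as z) (bs z) (mult R z) + \<epsilon> * \<bar>real_of_int (mult R z)\<bar>)"
    proof (rule sum_mono)
      fix z assume z: "z \<in> U"
      then have zs: "z \<in> unit_sq" using Usq by auto
      have "fst p z \<le> snd p z" using Pv[OF p(1)] zs unfolding valid_def by auto
      then show "gval (fst p z) (snd p z) (mult R z) \<le> gval (as z) (bs z) (mult R z) + \<epsilon> * \<bar>real_of_int (mult R z)\<bar>"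
        using p(2) z asbs[OF zs] by (intro gval_mono_eps) auto
    qed
    also have "\<dots> = L_AB as bs R + \<epsilon> * K"
      unfolding U_def K_def L_gval by (simp add: sum.distrib sum_distrib_left)
    finally show "0 \<le> L_AB as bs R + e" using epsK by linarith
  qed
  have "valid A B as bs" unfolding valid_def using bnd Lnn by blast
  moreover have "\<forall>X\<in>Ch. X \<subseteq> tok as bs"
  proof
    fix X assume "X \<in> Ch"
    then obtain p where p: "p \<in> P" "X = tok (fst p) (snd p)" using ChP by blast
    have "refines (fst p, snd p) (as, bs)" unfolding refines_def using as_ge[OF p(1)] bs_le[OF p(1)] by auto
    then show "X \<subseteq> tok as bs" using p(2) tok_sub by blast
  qed
  ultimately show ?thesis by blast
qed


lemma L_same: assumes "formal_union R" "\<forall>y\<in>unit_sq. a y = b y"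
  shows "L_AB a b R = (\<Sum>r\<leftarrow>R. Vol a r)"
proof -
  have "L_AB a b R = (\<Sum>z\<in>union_corners R. a z * of_int (mult R z))"
    unfolding L_gval
  proof (rule sum.cong)
    fix z assume "z \<in> union_corners R"
    then have "z \<in> unit_sq" using UC_sq[OF assms(1)] by blast
    then show "gval (a z) (b z) (mult R z) = a z * of_int (mult R z)" using assms(2) gval_same by metis
  qed simp
  also have "\<dots> = (\<Sum>r\<leftarrow>R. Vol a r)" by (rule lin_sum[OF assms(1) finite_UC]) simp
  finally show ?thesis .
qed

theorem mainTheorem15:
  fixes A B :: "real \<times> real \<Rightarrow> real"
  assumes "quasi_copula A" and "quasi_copula B"
    and "\<forall>y\<in>unit_sq. A y \<le> B y"
  shows "(\<exists>C. copula C \<and> (\<forall>y\<in>unit_sq. A y \<le> C y \<and> C y \<le> B y))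
         \<longleftrightarrow> (\<forall>R. formal_union R \<longrightarrow> L_AB A B R \<ge> 0)"
proof
  assume "\<exists>C. copula C \<and> (\<forall>y\<in>unit_sq. A y \<le> C y \<and> C y \<le> B y)"
  then obtain C where C: "copula C" "\<forall>y\<in>unit_sq. A y \<le> C y \<and> C y \<le> B y" by blast
  show "\<forall>R. formal_union R \<longrightarrow> L_AB A B R \<ge> 0"
  proof (intro allI impI)
    fix R assume R: "formal_union R"
    have "0 \<le> (\<Sum>r\<leftarrow>R. Vol C r)"
      using C(1) R unfolding copula_def formal_union_def by (intro sum_list_nonneg) auto
    also have "\<dots> = (\<Sum>z\<in>union_corners R. C z * of_int (mult R z))"
      by (rule lin_sum[OF R finite_UC, symmetric]) simp
    also have "\<dots> \<le> L_AB A B R"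
      unfolding L_gval using C(2) UC_sq[OF R] by (intro sum_mono gval_ge) auto
    finally show "L_AB A B R \<ge> 0" .
  qed
next
  assume L: "\<forall>R. formal_union R \<longrightarrow> L_AB A B R \<ge> 0"
  define F where "F = {tok a b | a b. valid A B a b}"
  have v0: "valid A B A B" unfolding valid_def using assms(3) L by auto
  have "\<forall>Ch\<in>chains F. \<exists>U\<in>F. \<forall>X\<in>Ch. X \<subseteq> U"
  proof
    fix Ch assume Ch: "Ch \<in> chains F"
    show "\<exists>U\<in>F. \<forall>X\<in>Ch. X \<subseteq> U"
    proof (cases "Ch = {}")
      case True then show ?thesis using v0 unfolding F_def by blast
    next
      case False
      then obtain a b where "valid A B a b" "\<forall>X\<in>Ch. X \<subseteq> tok a b"
        using chain_bound[OF assms(3) Ch[unfolded F_def]] by blast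
      then show ?thesis unfolding F_def by blast
    qed
  qed
  from Zorn_Lemma2[OF this] obtain M where M: "M \<in> F" "\<forall>X\<in>F. M \<subseteq> X \<longrightarrow> X = M" by blast
  then obtain a b where ab: "valid A B a b" "M = tok a b" unfolding F_def by blast
  have eq: "a y = b y" if y: "y \<in> unit_sq" for y
  proof (rule ccontr)
    assume ne: "a y \<noteq> b y"
    have abl: "\<forall>y\<in>unit_sq. a y \<le> b y" "\<forall>R. formal_union R \<longrightarrow> 0 \<le> L_AB a b R"
      using ab(1) unfolding valid_def by auto
    obtain c where c: "a y \<le> c" "c \<le> b y" "\<forall>R. formal_union R \<longrightarrow> 0 \<le> L_AB (a(y:=c)) (b(y:=c)) R"
      using step[OF abl y] by blast
    have v: "valid A B (a(y:=c)) (b(y:=c))"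
      unfolding valid_def
    proof (rule conjI[OF ballI])
      fix z assume z: "z \<in> unit_sq"
      have "A z \<le> a z \<and> a z \<le> b z \<and> b z \<le> B z" using ab(1) z unfolding valid_def by blast
      then show "A z \<le> (a(y:=c)) z \<and> (a(y:=c)) z \<le> (b(y:=c)) z \<and> (b(y:=c)) z \<le> B z"
        using c by (cases "z = y") auto
    qed (use c(3) in auto)
    have r: "refines (a,b) (a(y:=c), b(y:=c))" unfolding refines_def using c by auto
    have inF: "tok (a(y:=c)) (b(y:=c)) \<in> F" using v unfolding F_def by blast
    have sub: "M \<subseteq> tok (a(y:=c)) (b(y:=c))" using r ab(2) tok_sub by simp
    have "tok (a(y:=c)) (b(y:=c)) = M" using M(2) inF sub by simp
    then have "tok (a(y:=c)) (b(y:=c)) \<subseteq> tok a b" using ab(2) by simp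
    then have "refines (a(y:=c), b(y:=c)) (a,b)" by (simp only: tok_sub)
    then have "(a(y:=c)) y \<le> a y \<and> b y \<le> (b(y:=c)) y" using y unfolding refines_def by (simp only: fst_conv snd_conv)
    then have "c \<le> a y" "b y \<le> c" by simp_all
    then show False using c ne by simp
  qed
  have "copula a"
    unfolding copula_def grounded_def neutral_one_def
  proof (intro conjI ballI allI impI)
    fix x :: real assume x: "x \<in> {0..1}"
    have s: "(x,0) \<in> unit_sq" "(0,x) \<in> unit_sq" "(x,1) \<in> unit_sq" "(1,x) \<in> unit_sq"
      using x unfolding unit_sq_def by auto
    have bA: "A y \<le> a y \<and> a y \<le> B y" if "y \<in> unit_sq" for y
    proof -
      have "A y \<le> a y \<and> a y \<le> b y \<and> b y \<le> B y" using ab(1) that unfolding valid_def by blast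
      then show ?thesis by linarith
    qed
    have gA: "A (x,0) = 0" "A (0,x) = 0" "B (x,0) = 0" "B (0,x) = 0"
      using assms(1,2) x unfolding quasi_copula_def grounded_def by auto
    have nA: "A (x,1) = x" "A (1,x) = x" "B (x,1) = x" "B (1,x) = x"
      using assms(1,2) x unfolding quasi_copula_def neutral_one_def by auto
    show "a (x,0) = 0" using bA[OF s(1)] gA nA by linarith
    show "a (0,x) = 0" using bA[OF s(2)] gA nA by linarith
    show "a (x,1) = x" using bA[OF s(3)] gA nA by linarith
    show "a (1,x) = x" using bA[OF s(4)] gA nA by linarith
  next
    fix r assume r: "is_rect r"
    have fr: "formal_union [r]" using r unfolding formal_union_def by simp
    have "0 \<le> L_AB a b [r]" using ab(1) fr unfolding valid_def by blast
    also have "L_AB a b [r] = Vol a r" using L_same[OF fr] eq by simp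
    finally show "0 \<le> Vol a r" .
  qed
  moreover have "\<forall>y\<in>unit_sq. A y \<le> a y \<and> a y \<le> B y"
  proof
    fix y assume "y \<in> unit_sq"
    then have "A y \<le> a y \<and> a y \<le> b y \<and> b y \<le> B y" using ab(1) unfolding valid_def by blast
    then show "A y \<le> a y \<and> a y \<le> B y" by linarith
  qed
  ultimately show "\<exists>C. copula C \<and> (\<forall>y\<in>unit_sq. A y \<le> C y \<and> C y \<le> B y)" by blast
qed

end
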